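(* Let $(E\to M,\rho,\langle\cdot,\cdot\rangle,\circ)$ be a Courant algebroid, $(\mathbf I,\mathbf J,\mathbf K)$ an almost hypercomplex structure on $E$, and let $\nabla$ be the hypercomplex connection $$\nabla_XY=-\tfrac12\mathbf K\big(\mathbf JY\circ\mathbf IX-\mathbf J(Y\circ\mathbf IX)-\mathbf I(\mathbf JY\circ X)+\mathbf J\mathbf I(Y\circ X)\big).$$ Then for all $X,Y\in\Gamma(E)$: (a) $\nabla_X\mathbf J=0$; (b) $(\nabla_X\mathbf I)Y=\tfrac12\mathbf K N_{\mathbf I,\mathbf J}(X,\mathbf IY)+\tfrac12\mathbf J N_{\mathbf I,\mathbf J}(X,Y)$; (c) $X\circ Y+\tfrac12\mathbf K N_{\mathbf I,\mathbf J}(X,Y)=\nabla_XY-\nabla_YX+D\langle X,Y\rangle-\big(\mathbf ID\langle X,\mathbf IY\rangle+\mathbf JD\langle X,\mathbf JY\rangle+\mathbf KD\langle X,\mathbf KY\rangle\big)$.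
   Context: A Courant algebroid $(E\to M,\rho,\langle\cdot,\cdot\rangle,\circ)$ consists of a real vector bundle $E\to M$ over a smooth manifold, a nondegenerate symmetric fiberwise bilinear pairing $\langle\cdot,\cdot\rangle$ on $E$, a vector bundle map $\rho:E\to TM$ (the anchor), and an $\mathbb R$-bilinear operation $\circ$ on $\Gamma(E)$ (the Dorfman bracket) such that for all $f\in C^\infty(M)$, $x,y,z\in\Gamma(E)$: $x\circ(y\circ z)=(x\circ y)\circ z+y\circ(x\circ z)$; $\rho(x\circ y)=[\rho(x),\rho(y)]$; $x\circ(fy)=(\rho(x)f)y+f(x\circ y)$; $x\circ y+y\circ x=2D\langle x,y\rangle$; $(Df)\circ x=0$; $\rho(x)\langle y,z\rangle=\langle x\circ y,z\rangle+\langle y,x\circ z\rangle$. Here $D:C^\infty(M)\to\Gamma(E)$ is the $\mathbb R$-linear map defined by $\langle Df,x\rangle=\tfrac12\rho(x)f$. For vector bundle endomorphisms $F,G$ of $E$ (over $\mathrm{id}_M$), the Nijenhuis concomitant is the tensor $N_{F,G}:E\otimes E\to E$ given by $N_{F,G}(X,Y)=FX\circ GY-F(X\circ GY)-G(FX\circ Y)+FG(X\circ Y)+GX\circ FY-G(X\circ FY)-F(GX\circ Y)+GF(X\circ Y)$. An almost hypercomplex structure on $E$ is a triple $(\mathbf I,\mathbf J,\mathbf K)$ of vector bundle endomorphisms of $E$ over $\mathrm{id}_M$, each orthogonal for $\langle\cdot,\cdot\rangle$, with $\mathbf I^2=\mathbf J^2=\mathbf K^2=\mathbf I\mathbf J\mathbf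 K=-1$. Given an almost hypercomplex structure, for $f\in C^\infty(M)$ and $X,Y\in\Gamma(E)$ set $\Delta_f(X,Y)=\langle X,Y\rangle Df+\langle\mathbf IX,Y\rangle\mathbf I Df+\langle\mathbf JX,Y\rangle\mathbf JDf+\langle\mathbf KX,Y\rangle\mathbf KDf$. A hypercomplex connection is an $\mathbb R$-bilinear map $\Gamma(E)\times\Gamma(E)\to\Gamma(E)$, $(X,Y)\mapsto\nabla_XY$, with $\nabla_{fX}Y=f\nabla_XY$ and $\nabla_X(fY)=(\rho(X)f)Y+f\nabla_XY-\Delta_f(X,Y)$. For an endomorphism $P$ of $E$, $(\nabla_XP)Y:=\nabla_X(PY)-P(\nabla_XY)$, and $\nabla_XP=0$ means this vanishes for all $Y$. *)

theory Defs
  imports Complex_Main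
begin

text \<open>
The smooth functions C^\<infinity>(M) are an
abstract commutative real algebra of type 'f; the sections \<Gamma>(E) form a real vector
space of type 'e which is a module over 'f via smul.  Vector fields on M are
represented by their action on functions (derivations of 'f); the anchor rho sends
a section x to the derivation rho x.
\<close>

definition section_module ::
  "('f::{comm_ring_1,real_algebra_1} \<Rightarrow> 'e::real_vector \<Rightarrow> 'e) \<Rightarrow> bool" where
  "section_module smul \<longleftrightarrow>
     (\<forall>f x y. smul f (x + y) = smul f x + smul f y) \<and>
     (\<forall>f g x. smul (f + g) x = smul f x + smul g x) \<and>
     (\<forall>f g x. smul (f * g) x = smul f (smul g x)) \<and>
     (\<forall>x. smul 1 x = x) \<and>
     (\<forall>c x. smul (of_real c) x = c *\<^sub>R x)"

definition derivation :: "('f::{comm_ring_1,real_algebra_1} \<Rightarrow> 'f) \<Rightarrow> bool" where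
  "derivation v \<longleftrightarrow>
     (\<forall>f g. v (f + g) = v f + v g) \<and>
     (\<forall>c f. v (c *\<^sub>R f) = c *\<^sub>R v f) \<and>
     (\<forall>f g. v (f * g) = f * v g + g * v f)"

definition vf_bracket :: "('f::ring \<Rightarrow> 'f) \<Rightarrow> ('f \<Rightarrow> 'f) \<Rightarrow> ('f \<Rightarrow> 'f)" where
  "vf_bracket v w = (\<lambda>f. v (w f) - w (v f))"

text \<open>The operator D, characterised by  <D f, x> = 1/2 rho(x) f  (unique by nondegeneracy).\<close>
definition Dop :: "('e \<Rightarrow> 'e \<Rightarrow> 'f::real_vector) \<Rightarrow> ('e \<Rightarrow> 'f \<Rightarrow> 'f) \<Rightarrow> 'f \<Rightarrow> 'e" where
  "Dop pair rho f = (THE d. \<forall>x. pair d x = (1/2) *\<^sub>R rho x f)"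

definition courant_algebroid ::
  "('f::{comm_ring_1,real_algebra_1} \<Rightarrow> 'e::real_vector \<Rightarrow> 'e) \<Rightarrow> ('e \<Rightarrow> 'e \<Rightarrow> 'f) \<Rightarrow>
   ('e \<Rightarrow> 'f \<Rightarrow> 'f) \<Rightarrow> ('e \<Rightarrow> 'e \<Rightarrow> 'e) \<Rightarrow> bool" where
  "courant_algebroid smul pair rho dorf \<longleftrightarrow>
     section_module smul \<and>
     \<comment> \<open>pairing: symmetric, C^\<infinity>(M)-bilinear, nondegenerate\<close>
     (\<forall>x y. pair x y = pair y x) \<and>
     (\<forall>x y z. pair (x + y) z = pair x z + pair y z) \<and>
     (\<forall>f x y. pair (smul f x) y = f * pair x y) \<and>
     (\<forall>x. (\<forall>y. pair x y = 0) \<longrightarrow> x = 0) \<and>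
     \<comment> \<open>anchor: a vector bundle map E \<rightarrow> TM\<close>
     (\<forall>x. derivation (rho x)) \<and>
     (\<forall>x y f. rho (x + y) f = rho x f + rho y f) \<and>
     (\<forall>g x f. rho (smul g x) f = g * rho x f) \<and>
     \<comment> \<open>D is well defined\<close>
     (\<forall>f. \<exists>d. \<forall>x. pair d x = (1/2) *\<^sub>R rho x f) \<and>
     \<comment> \<open>Dorfman bracket is R-bilinear\<close>
     (\<forall>x y z. dorf (x + y) z = dorf x z + dorf y z) \<and>
     (\<forall>x y z. dorf x (y + z) = dorf x y + dorf x z) \<and>
     (\<forall>c x y. dorf (c *\<^sub>R x) y = c *\<^sub>R dorf x y) \<and>
     (\<forall>c x y. dorf x (c *\<^sub>R y) = c *\<^sub>R dorf x y) \<and>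
     \<comment> \<open>Courant algebroid axioms\<close>
     (\<forall>x y z. dorf x (dorf y z) = dorf (dorf x y) z + dorf y (dorf x z)) \<and>
     (\<forall>x y. rho (dorf x y) = vf_bracket (rho x) (rho y)) \<and>
     (\<forall>x f y. dorf x (smul f y) = smul (rho x f) y + smul f (dorf x y)) \<and>
     (\<forall>x y. dorf x y + dorf y x = 2 *\<^sub>R Dop pair rho (pair x y)) \<and>
     (\<forall>f x. dorf (Dop pair rho f) x = 0) \<and>
     (\<forall>x y z. rho x (pair y z) = pair (dorf x y) z + pair y (dorf x z))"

text \<open>Vector bundle endomorphism of E over id_M: a C^\<infinity>(M)-linear map of sections.\<close>
definition bundle_endo :: "('f \<Rightarrow> 'e::real_vector \<Rightarrow> 'e) \<Rightarrow> ('e \<Rightarrow> 'e) \<Rightarrow> bool" where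
  "bundle_endo smul F \<longleftrightarrow>
     (\<forall>x y. F (x + y) = F x + F y) \<and> (\<forall>f x. F (smul f x) = smul f (F x))"

definition orthogonal_endo :: "('e \<Rightarrow> 'e \<Rightarrow> 'f) \<Rightarrow> ('e \<Rightarrow> 'e) \<Rightarrow> bool" where
  "orthogonal_endo pair F \<longleftrightarrow> (\<forall>x y. pair (F x) (F y) = pair x y)"

definition almost_hypercomplex ::
  "('f \<Rightarrow> 'e::real_vector \<Rightarrow> 'e) \<Rightarrow> ('e \<Rightarrow> 'e \<Rightarrow> 'f) \<Rightarrow> ('e \<Rightarrow> 'e) \<Rightarrow> ('e \<Rightarrow> 'e) \<Rightarrow> ('e \<Rightarrow> 'e) \<Rightarrow> bool" where
  "almost_hypercomplex smul pair I J K \<longleftrightarrow>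
     bundle_endo smul I \<and> bundle_endo smul J \<and> bundle_endo smul K \<and>
     orthogonal_endo pair I \<and> orthogonal_endo pair J \<and> orthogonal_endo pair K \<and>
     (\<forall>x. I (I x) = - x) \<and> (\<forall>x. J (J x) = - x) \<and> (\<forall>x. K (K x) = - x) \<and>
     (\<forall>x. I (J (K x)) = - x)"

definition nijenhuis_conc ::
  "('e \<Rightarrow> 'e \<Rightarrow> 'e::real_vector) \<Rightarrow> ('e \<Rightarrow> 'e) \<Rightarrow> ('e \<Rightarrow> 'e) \<Rightarrow> 'e \<Rightarrow> 'e \<Rightarrow> 'e" where
  "nijenhuis_conc dorf F G X Y =
     dorf (F X) (G Y) - F (dorf X (G Y)) - G (dorf (F X) Y) + F (G (dorf X Y))
     + dorf (G X) (F Y) - G (dorf X (F Y)) - F (dorf (G X) Y) + G (F (dorf X Y))"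

end

theory Submission
  imports Defs
begin

lemma endo_lin:
  assumes SM: "section_module smul" and E: "bundle_endo smul F"
  shows "F (x + y) = F x + F y" "F (- x) = - F x" "F (x - y) = F x - F y"
        "F (c *\<^sub>R x) = c *\<^sub>R F x" "F 0 = 0"
proof -
  have add: "\<And>x y. F (x + y) = F x + F y" using E by (simp add: bundle_endo_def)
  interpret additive F by standard (rule add)
  show "F (x + y) = F x + F y" "F (- x) = - F x" "F (x - y) = F x - F y" "F 0 = 0"
    by (simp_all add: add minus diff zero)
  have "F (smul (of_real c) x) = smul (of_real c) (F x)" using E by (simp add: bundle_endo_def)
  then show "F (c *\<^sub>R x) = c *\<^sub>R F x" using SM by (simp add: section_module_def)
qed

theorem mainTheorem4:
  fixes smul :: "'f::{comm_ring_1,real_algebra_1} \<Rightarrow> 'e::real_vector \<Rightarrow> 'e"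
    and pair :: "'e \<Rightarrow> 'e \<Rightarrow> 'f"
    and rho :: "'e \<Rightarrow> 'f \<Rightarrow> 'f"
    and dorf :: "'e \<Rightarrow> 'e \<Rightarrow> 'e"
    and I J K :: "'e \<Rightarrow> 'e"
    and nabla :: "'e \<Rightarrow> 'e \<Rightarrow> 'e"
  assumes CA: "courant_algebroid smul pair rho dorf"
    and HC: "almost_hypercomplex smul pair I J K"
    and nabla_def: "\<And>X Y. nabla X Y =
       - (1/2) *\<^sub>R K (dorf (J Y) (I X) - J (dorf Y (I X)) - I (dorf (J Y) X) + J (I (dorf Y X)))"
  shows "(\<forall>X Y. nabla X (J Y) - J (nabla X Y) = 0) \<and>
         (\<forall>X Y. nabla X (I Y) - I (nabla X Y) =
           (1/2) *\<^sub>R K (nijenhuis_conc dorf I J X (I Y)) + (1/2) *\<^sub>R J (nijenhuis_conc dorf I J X Y)) \<and>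
         (\<forall>X Y. dorf X Y + (1/2) *\<^sub>R K (nijenhuis_conc dorf I J X Y) =
           nabla X Y - nabla Y X + Dop pair rho (pair X Y)
           - (I (Dop pair rho (pair X (I Y))) + J (Dop pair rho (pair X (J Y)))
              + K (Dop pair rho (pair X (K Y)))))"
proof -
  have SM: "section_module smul" using CA by (simp add: courant_algebroid_def)
  have EI: "bundle_endo smul I" and EJ: "bundle_endo smul J" and EK: "bundle_endo smul K"
    using HC by (simp_all add: almost_hypercomplex_def)
  note LI = endo_lin[OF SM EI] and LJ = endo_lin[OF SM EJ] and LK = endo_lin[OF SM EK]
  have II: "\<And>x. I (I x) = - x" and JJ: "\<And>x. J (J x) = - x" and KK: "\<And>x. K (K x) = - x"
    and IJK: "\<And>x. I (J (K x)) = - x"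
    using HC by (simp_all add: almost_hypercomplex_def)
  have IJ: "\<And>x. I (J x) = K x"
  proof -
    fix x have "I (J (K (K x))) = - K x" by (rule IJK)
    then show "I (J x) = K x" by (simp add: KK LI LJ)
  qed
  have JK: "\<And>x. J (K x) = I x"
  proof -
    fix x have "I (I (J (K x))) = I (- x)" by (simp add: IJK)
    then show "J (K x) = I x" by (simp add: II LI)
  qed
  have IK: "\<And>x. I (K x) = - J x"
  proof -
    fix x have "J (K (K x)) = I (K x)" by (rule JK)
    then show "I (K x) = - J x" by (simp add: KK LJ)
  qed
  have JI: "\<And>x. J (I x) = - K x" by (metis JK JJ)
  have KJ: "\<And>x. K (J x) = - I x" by (metis IJ LI(2) JJ)
  have KI: "\<And>x. K (I x) = J x" by (metis IJ JI LI(2) II minus_minus)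
  note comp = II JJ KK IJ JK IK JI KJ KI
  have pair_add0: "\<forall>x y z. pair (x + y) z = pair x z + pair y z"
    using CA unfolding courant_algebroid_def apply (elim conjE) apply assumption done
  have pair_sym0: "\<forall>x y. pair x y = pair y x"
    using CA unfolding courant_algebroid_def apply (elim conjE) apply assumption done
  have pair_add: "\<And>x y z. pair (x + y) z = pair x z + pair y z" using pair_add0 by blast
  have pair_sym: "\<And>x y. pair x y = pair y x" using pair_sym0 by blast
  interpret pl: additive "\<lambda>x. pair x z" for z by standard (rule pair_add)
  have pminusL: "\<And>x y. pair (- x) y = - pair x y" by (rule pl.minus)
  have pminusR: "\<And>x y. pair x (- y) = - pair x y" by (metis pair_sym pminusL)
  have orth: "\<And>x y. pair (I x) (I y) = pair x y" "\<And>x y. pair (J x) (J y) = pair x y"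
     "\<And>x y. pair (K x) (K y) = pair x y"
    using HC by (simp_all add: almost_hypercomplex_def orthogonal_endo_def)
  have skI: "\<And>a b. pair (I a) b = - pair a (I b)" by (metis orth(1) II pminusL)
  have skJ: "\<And>a b. pair (J a) b = - pair a (J b)" by (metis orth(2) JJ pminusL)
  have skK: "\<And>a b. pair (K a) b = - pair a (K b)" by (metis orth(3) KK pminusL)
  have nd0: "\<forall>x. (\<forall>y. pair x y = 0) \<longrightarrow> x = 0"
    using CA unfolding courant_algebroid_def apply (elim conjE) apply assumption done
  have der0: "\<forall>x. derivation (rho x)"
    using CA unfolding courant_algebroid_def apply (elim conjE) apply assumption done
  have Dex0: "\<forall>f. \<exists>d. \<forall>x. pair d x = (1/2) *\<^sub>R rho x f"
    using CA unfolding courant_algebroid_def apply (elim conjE) apply assumption done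
  have dl0: "\<forall>x y z. dorf (x + y) z = dorf x z + dorf y z"
    using CA unfolding courant_algebroid_def apply (elim conjE) apply assumption done
  have dr0: "\<forall>x y z. dorf x (y + z) = dorf x y + dorf x z"
    using CA unfolding courant_algebroid_def apply (elim conjE) apply assumption done
  have dsl0: "\<forall>c x y. dorf (c *\<^sub>R x) y = c *\<^sub>R dorf x y"
    using CA unfolding courant_algebroid_def apply (elim conjE) apply assumption done
  have dsr0: "\<forall>c x y. dorf x (c *\<^sub>R y) = c *\<^sub>R dorf x y"
    using CA unfolding courant_algebroid_def apply (elim conjE) apply assumption done
  have dsym0: "\<forall>x y. dorf x y + dorf y x = 2 *\<^sub>R Dop pair rho (pair x y)"
    using CA unfolding courant_algebroid_def apply (elim conjE) apply assumption done
  have nd: "\<And>a. (\<forall>y. pair a y = 0) \<Longrightarrow> a = 0" using nd0 by blast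
  have der: "\<And>x. derivation (rho x)" using der0 by blast
  have Dchar: "\<And>f x. pair (Dop pair rho f) x = (1/2) *\<^sub>R rho x f"
  proof -
    fix f x
    obtain d where d: "\<forall>x. pair d x = (1/2) *\<^sub>R rho x f" using Dex0 by blast
    have "\<exists>!d. \<forall>x. pair d x = (1/2) *\<^sub>R rho x f"
    proof (rule ex1I[of _ d])
      show "\<forall>x. pair d x = (1/2) *\<^sub>R rho x f" by (rule d)
      fix e assume e: "\<forall>x. pair e x = (1/2) *\<^sub>R rho x f"
      have "\<forall>y. pair (e - d) y = 0" using e d pl.diff by simp
      then show "e = d" using nd by fastforce
    qed
    then have "\<forall>x. pair (Dop pair rho f) x = (1/2) *\<^sub>R rho x f"
      unfolding Dop_def by (rule theI')
    then show "pair (Dop pair rho f) x = (1/2) *\<^sub>R rho x f" by blast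
  qed
  have Dminus: "\<And>f. Dop pair rho (- f) = - Dop pair rho f"
  proof -
    fix f
    have rm: "\<And>x. rho x (- f) = - rho x f"
    proof -
      fix x
      interpret additive "rho x" by standard (use der[of x] in \<open>simp add: derivation_def\<close>)
      show "rho x (- f) = - rho x f" by (rule minus)
    qed
    have "\<forall>y. pair (Dop pair rho (- f) + Dop pair rho f) y = 0"
      by (simp add: pair_add Dchar rm)
    then have "Dop pair rho (- f) + Dop pair rho f = 0" by (rule nd)
    then show "Dop pair rho (- f) = - Dop pair rho f" by (simp add: add_eq_0_iff)
  qed
  have dl: "\<And>x y z. dorf (x + y) z = dorf x z + dorf y z"
    and dr: "\<And>x y z. dorf x (y + z) = dorf x y + dorf x z"
    and dsl: "\<And>c x y. dorf (c *\<^sub>R x) y = c *\<^sub>R dorf x y"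
    and dsr: "\<And>c x y. dorf x (c *\<^sub>R y) = c *\<^sub>R dorf x y"
    and dsym: "\<And>x y. dorf x y + dorf y x = 2 *\<^sub>R Dop pair rho (pair x y)"
    using dl0 dr0 dsl0 dsr0 dsym0 by blast+
  have dml: "\<And>x y. dorf (- x) y = - dorf x y" using dsl[of "-1"] by simp
  have dmr: "\<And>x y. dorf x (- y) = - dorf x y" using dsr[of _ "-1"] by simp
  have dmdl: "\<And>x y z. dorf (x - y) z = dorf x z - dorf y z" by (metis diff_conv_add_uminus dl dml)
  have dmdr: "\<And>x y z. dorf x (y - z) = dorf x y - dorf x z" by (metis diff_conv_add_uminus dr dmr)
  have sw: "\<And>a b. dorf a b = - dorf b a + 2 *\<^sub>R Dop pair rho (pair b a)"
    by (metis dsym pair_sym add_diff_cancel_left' diff_conv_add_uminus add.commute)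
  note lin = LI LJ LK dl dr dsl dsr dml dmr dmdl dmdr pminusL pminusR Dminus skI skJ skK
  show ?thesis
  proof (intro conjI allI)
    fix X Y
    show "nabla X (J Y) - J (nabla X Y) = 0"
      by (simp add: nabla_def lin comp algebra_simps)
  next
    fix X Y
    show "nabla X (I Y) - I (nabla X Y) =
           (1/2) *\<^sub>R K (nijenhuis_conc dorf I J X (I Y)) + (1/2) *\<^sub>R J (nijenhuis_conc dorf I J X Y)"
      by (simp add: nabla_def nijenhuis_conc_def lin comp algebra_simps
          sw[of Y X] sw[of Y "I X"] sw[of Y "J X"] sw[of Y "K X"]
          sw[of "I Y" X] sw[of "I Y" "I X"] sw[of "I Y" "J X"] sw[of "I Y" "K X"]
          sw[of "J Y" X] sw[of "J Y" "I X"] sw[of "J Y" "J X"] sw[of "J Y" "K X"]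
          sw[of "K Y" X] sw[of "K Y" "I X"] sw[of "K Y" "J X"] sw[of "K Y" "K X"])
  next
    fix X Y
    show "dorf X Y + (1/2) *\<^sub>R K (nijenhuis_conc dorf I J X Y) =
           nabla X Y - nabla Y X + Dop pair rho (pair X Y)
           - (I (Dop pair rho (pair X (I Y))) + J (Dop pair rho (pair X (J Y)))
              + K (Dop pair rho (pair X (K Y))))"
      apply (simp add: nabla_def nijenhuis_conc_def lin comp algebra_simps
          sw[of Y X] sw[of Y "I X"] sw[of Y "J X"] sw[of Y "K X"]
          sw[of "I Y" X] sw[of "I Y" "I X"] sw[of "I Y" "J X"] sw[of "I Y" "K X"]
          sw[of "J Y" X] sw[of "J Y" "I X"] sw[of "J Y" "J X"] sw[of "J Y" "K X"]
          sw[of "K Y" X] sw[of "K Y" "I X"] sw[of "K Y" "J X"] sw[of "K Y" "K X"])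
      by (simp add: scaleR_add_left[symmetric])
  qed
qed

end
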